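(* Let $w\in L^1_{loc}(\mathbb R^N)$ be nonnegative and for $r>0$ set $m_w(r):=\mathrm{ess\,inf}_{\nu(x)>r}w(x)$. Let $f:(0,+\infty)\to(0,+\infty)$ be a positive continuous nondecreasing function with $f(w)\in L^1_{loc}(\mathbb R^N)$. If $$\liminf_{R\to+\infty}\frac1{|B_R|}\int_{B_R}f(w(x))\,dx=0,$$ then $\lim_{t\to0}f(t)=0$ and $m_w(r)=0$ for every $r>0$.
   Context: $\mathbb R^N$ carries the structure of a homogeneous Carnot group $(\mathbb R^N,\circ,\delta_R)$ with homogeneous dimension $Q$ (Euclidean $\mathbb R^N$ included), and $\nu$ is a fixed homogeneous norm: a continuous function $\nu:\mathbb R^N\to[0,\infty)$ with $\nu(\xi^{-1})=\nu(\xi)$, $\nu(\xi)=0$ iff $\xi=0$, $\nu(\delta_R\xi)=R\nu(\xi)$. $B_R=\{x:\nu(x)<R\}$, and $|B_R|$ is its Lebesgue measure. *)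

theory Defs
  imports "HOL-Analysis.Analysis"
begin

definition dil :: "('n::finite \<Rightarrow> nat) \<Rightarrow> real \<Rightarrow> real^'n \<Rightarrow> real^'n" where
  "dil ex R x = (\<chi> i. R ^ ex i * x $ i)"

definition hom_dim :: "('n::finite \<Rightarrow> nat) \<Rightarrow> nat" where
  "hom_dim ex = (\<Sum>i\<in>UNIV. ex i)"

definition hom_group ::
  "(real^'n::finite \<Rightarrow> real^'n \<Rightarrow> real^'n) \<Rightarrow> (real^'n \<Rightarrow> real^'n) \<Rightarrow> ('n \<Rightarrow> nat) \<Rightarrow> bool" where
  "hom_group op ginv ex \<longleftrightarrow>
     (\<forall>x y z. op (op x y) z = op x (op y z)) \<and>
     (\<forall>x. op x 0 = x \<and> op 0 x = x) \<and>
     (\<forall>x. op x (ginv x) = 0 \<and> op (ginv x) x = 0) \<and>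
     continuous_on UNIV (\<lambda>p. op (fst p) (snd p)) \<and> continuous_on UNIV ginv \<and>
     (\<forall>i. ex i \<ge> 1) \<and>
     (\<forall>R>0. \<forall>x y. dil ex R (op x y) = op (dil ex R x) (dil ex R y))"

definition hom_norm ::
  "(real^'n::finite \<Rightarrow> real^'n) \<Rightarrow> ('n \<Rightarrow> nat) \<Rightarrow> (real^'n \<Rightarrow> real) \<Rightarrow> bool" where
  "hom_norm ginv ex \<nu> \<longleftrightarrow>
     continuous_on UNIV \<nu> \<and> (\<forall>x. \<nu> x \<ge> 0) \<and>
     (\<forall>x. \<nu> (ginv x) = \<nu> x) \<and> (\<forall>x. \<nu> x = 0 \<longleftrightarrow> x = 0) \<and>
     (\<forall>R>0. \<forall>x. \<nu> (dil ex R x) = R * \<nu> x)"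

definition hball :: "(real^'n::finite \<Rightarrow> real) \<Rightarrow> real \<Rightarrow> (real^'n) set" where
  "hball \<nu> R = {x. \<nu> x < R}"

definition ess_inf_on :: "'a measure \<Rightarrow> 'a set \<Rightarrow> ('a \<Rightarrow> real) \<Rightarrow> real" where
  "ess_inf_on M S g = Sup {c. AE x in M. x \<in> S \<longrightarrow> c \<le> g x}"

definition locally_integrable :: "(real^'n::finite \<Rightarrow> real) \<Rightarrow> bool" where
  "locally_integrable g \<longleftrightarrow> (\<forall>K. compact K \<longrightarrow> set_integrable lebesgue K g)"

end

theory Submission imports Defs begin

lemma dil_nth[simp]: "dil ex R x $ i = R ^ ex i * x $ i"
  by (simp add: dil_def)

lemma dil_comp: "dil ex a (dil ex b x) = dil ex (a*b) x"
  by (simp add: dil_def vec_eq_iff power_mult_distrib)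

lemma nu_lower:
  fixes \<nu> :: "real^'n::finite \<Rightarrow> real"
  assumes nrm: "hom_norm ginv ex \<nu>" and ex1: "\<forall>i. ex i \<ge> 1"
  shows "\<exists>m>0. \<forall>x. 1 \<le> norm x \<longrightarrow> m \<le> \<nu> x"
proof -
  have cont: "continuous_on UNIV \<nu>" and nn: "\<And>x. \<nu> x \<ge> 0" and z: "\<And>x. \<nu> x = 0 \<longleftrightarrow> x = 0"
    and hom: "\<And>R x. R > 0 \<Longrightarrow> \<nu> (dil ex R x) = R * \<nu> x"
    using nrm unfolding hom_norm_def by auto
  have ne: "sphere (0::real^'n) 1 \<noteq> {}" by simp
  obtain x0 where x0: "x0 \<in> sphere 0 1" "\<forall>y\<in>sphere 0 1. \<nu> x0 \<le> \<nu> y"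
    using continuous_attains_inf[OF compact_sphere ne continuous_on_subset[OF cont]] by blast
  have x0nz: "x0 \<noteq> 0" using x0(1) by auto
  have mpos: "\<nu> x0 > 0" using nn[of x0] z[of x0] x0nz by linarith
  show ?thesis
  proof (intro exI[of _ "\<nu> x0"] conjI allI impI mpos)
    fix x :: "real^'n" assume x: "1 \<le> norm x"
    let ?g = "\<lambda>t. norm (dil ex t x)"
    have gc: "continuous_on {0..1} ?g"
      unfolding dil_def by (intro continuous_intros)
    have g0: "?g 0 = 0"
    proof -
      have "dil ex 0 x = 0" using ex1 by (simp add: vec_eq_iff) (metis Suc_le_lessD)
      then show ?thesis by simp
    qed
    have g1: "?g 1 = norm x" by (simp add: dil_def vec_eq_iff)
    obtain t where t: "0 \<le> t" "t \<le> 1" "?g t = 1"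
      using IVT'[of ?g 0 1 1, OF _ _ _ gc] g0 g1 x by auto
    have tpos: "t > 0" using t g0 by (metis less_eq_real_def zero_neq_one)
    have "\<nu> x0 \<le> \<nu> (dil ex t x)" using x0(2) t(3) by simp
    also have "\<dots> = t * \<nu> x" using hom tpos by simp
    also have "\<dots> \<le> \<nu> x" using t(2) nn[of x] using mult_right_mono[of t 1 "\<nu> x"] by simp
    finally show "\<nu> x0 \<le> \<nu> x" .
  qed
qed


lemma hball_bounded:
  fixes \<nu> :: "real^'n::finite \<Rightarrow> real"
  assumes nrm: "hom_norm ginv ex \<nu>" and ex1: "\<forall>i. ex i \<ge> 1"
  shows "bounded (hball \<nu> R)"
proof (cases "R > 0")
  case False
  have "hball \<nu> R = {}" using nrm False unfolding hom_norm_def hball_def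
    by (auto, meson less_le_trans not_le)
  then show ?thesis by simp
next
  case Rpos: True
  obtain m where m: "m > 0" "\<And>x. 1 \<le> norm x \<Longrightarrow> m \<le> \<nu> x" using nu_lower[OF nrm ex1] by blast
  have hom: "\<And>R x. R > 0 \<Longrightarrow> \<nu> (dil ex R x) = R * \<nu> x"
    using nrm unfolding hom_norm_def by auto
  define c where "c = m / R"
  have cpos: "c > 0" using m Rpos by (simp add: c_def)
  show ?thesis unfolding bounded_iff
  proof (intro exI[of _ "\<Sum>i\<in>UNIV. 1 / c ^ ex i"] ballI)
    fix x assume "x \<in> hball \<nu> R"
    then have xR: "\<nu> x < R" by (simp add: hball_def)
    have "\<nu> (dil ex c x) = c * \<nu> x" using hom cpos by simp
    also have "\<dots> < c * R" using xR cpos by simp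
    also have "\<dots> = m" using Rpos by (simp add: c_def)
    finally have "norm (dil ex c x) < 1" using m(2) by (meson not_le)
    then have ci: "\<bar>c ^ ex i * x $ i\<bar> < 1" for i
      using component_le_norm_cart[of "dil ex c x" i] by simp
    have "\<bar>x $ i\<bar> \<le> 1 / c ^ ex i" for i
    proof -
      have cp: "c ^ ex i > 0" using cpos by simp
      have "c ^ ex i * \<bar>x $ i\<bar> < 1" using ci[of i] cp by (simp add: abs_mult)
      then show ?thesis using cp by (simp add: field_simps)
    qed
    then have "(\<Sum>i\<in>UNIV. \<bar>x $ i\<bar>) \<le> (\<Sum>i\<in>UNIV. 1 / c ^ ex i)"
      by (intro sum_mono) auto
    then show "norm x \<le> (\<Sum>i\<in>UNIV. 1 / c ^ ex i)"
      using norm_le_l1_cart[of x] by linarith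
  qed
qed

lemma hball_open:
  fixes \<nu> :: "real^'n::finite \<Rightarrow> real"
  assumes nrm: "hom_norm ginv ex \<nu>"
  shows "open (hball \<nu> R)"
  using nrm unfolding hom_norm_def hball_def
  by (intro open_Collect_less) (auto intro: continuous_intros)

lemma hball_contains_ball:
  fixes \<nu> :: "real^'n::finite \<Rightarrow> real"
  assumes nrm: "hom_norm ginv ex \<nu>" and ex1: "\<forall>i. ex i \<ge> 1"
  shows "\<exists>d>0. \<forall>R\<ge>1. ball 0 (R * d) \<subseteq> hball \<nu> R"
proof -
  have z: "\<nu> 0 = 0" using nrm unfolding hom_norm_def by auto
  have hom: "\<And>R x. R > 0 \<Longrightarrow> \<nu> (dil ex R x) = R * \<nu> x"
    using nrm unfolding hom_norm_def by auto
  have "0 \<in> hball \<nu> 1" using z by (simp add: hball_def)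
  then obtain d where d: "d > 0" "ball 0 d \<subseteq> hball \<nu> 1"
    using hball_open[OF nrm] open_contains_ball by blast
  show ?thesis
  proof (intro exI[of _ d] conjI allI impI d subsetI)
    fix R :: real and x :: "real^'n" assume R: "1 \<le> R" and x: "x \<in> ball 0 (R * d)"
    define y where "y = dil ex (1/R) x"
    have "\<bar>y $ i\<bar> \<le> \<bar>((1/R) *\<^sub>R x) $ i\<bar>" for i
    proof -
      have "R \<le> R ^ ex i" using R ex1 by (metis power_one_right power_increasing)
      then have "1 / R ^ ex i \<le> 1 / R" using R by (simp add: frac_le)
      then have "(1/R) ^ ex i \<le> 1 / R" by (simp add: power_one_over)
      then have "(1/R) ^ ex i * \<bar>x $ i\<bar> \<le> 1 / R * \<bar>x $ i\<bar>"
        by (intro mult_right_mono) auto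
      then show ?thesis using R by (simp add: y_def abs_mult)
    qed
    then have "norm y \<le> norm ((1/R) *\<^sub>R x)" by (intro norm_le_componentwise_cart) simp
    also have "\<dots> = norm x / R" using R by simp
    also have "\<dots> < d" using x R by (simp add: field_simps)
    finally have "y \<in> hball \<nu> 1" using d by auto
    then have "\<nu> y < 1" by (simp add: hball_def)
    moreover have "x = dil ex R y" using R by (simp add: y_def vec_eq_iff dil_def power_one_over field_simps)
    ultimately have "\<nu> x < R" using hom[of R y] R by simp
    then show "x \<in> hball \<nu> R" by (simp add: hball_def)
  qed
qed


lemma const_set_integrable:
  assumes "A \<in> fmeasurable M"
  shows "set_integrable M A (\<lambda>_. a::real)"
proof -
  have "integrable M (\<lambda>x. indicator A x * a)"
    using assms by (intro integrable_mult_left integrable_real_indicator) (auto simp: fmeasurable_def)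
  then show ?thesis unfolding set_integrable_def by simp
qed

lemma set_integral_subset_nonneg:
  fixes g :: "_ \<Rightarrow> real"
  assumes "set_integrable M A g" "B \<in> sets M" "B \<subseteq> A" "\<And>x. g x \<ge> 0"
  shows "(LINT x:B|M. g x) \<le> (LINT x:A|M. g x)"
proof -
  have iB: "set_integrable M B g" using set_integrable_subset assms by blast
  show ?thesis using assms(1) iB unfolding set_lebesgue_integral_def set_integrable_def
    by (intro integral_mono) (use assms in \<open>auto simp: indicator_def\<close>)
qed

theorem lemma4p5:
  fixes op :: "real^'n::finite \<Rightarrow> real^'n \<Rightarrow> real^'n"
    and ginv :: "real^'n \<Rightarrow> real^'n"
    and ex :: "'n \<Rightarrow> nat"
    and \<nu> :: "real^'n \<Rightarrow> real"
    and w :: "real^'n \<Rightarrow> real"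
    and f :: "real \<Rightarrow> real"
  assumes grp: "hom_group op ginv ex"
    and nrm: "hom_norm ginv ex \<nu>"
    and w_loc: "locally_integrable w"
    and w_nonneg: "\<forall>x. w x \<ge> 0"
    and f_pos: "\<forall>t>0. f t > 0"
    and f_cont: "continuous_on {0<..} f"
    and f_mono: "mono_on {0<..} f"
    and f_zero: "(f \<longlongrightarrow> f 0) (at_right 0)"
    and fw_loc: "locally_integrable (\<lambda>x. f (w x))"
    and liminf0: "Liminf at_top (\<lambda>R::real.
        ereal ((LINT x:hball \<nu> R|lebesgue. f (w x)) / measure lebesgue (hball \<nu> R))) = 0"
  shows "(f \<longlongrightarrow> 0) (at_right 0) \<and> (\<forall>r>0. ess_inf_on lebesgue {x. \<nu> x > r} w = 0)"
proof -
  have ex1: "\<forall>i. ex i \<ge> 1" using grp unfolding hom_group_def by auto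
  define B where "B = hball \<nu>"
  have Bfm: "B R \<in> fmeasurable lebesgue" for R
    unfolding B_def using hball_bounded[OF nrm ex1] hball_open[OF nrm] by (intro lmeasurable_open)
  have Bint: "set_integrable lebesgue (B R) (\<lambda>x. f (w x))" for R
  proof -
    have "compact (closure (B R))" using hball_bounded[OF nrm ex1]
      by (simp add: B_def compact_closure)
    then have "set_integrable lebesgue (closure (B R)) (\<lambda>x. f (w x))"
      by (rule fw_loc[unfolded locally_integrable_def, rule_format])
    then show ?thesis
      by (rule set_integrable_subset[OF _ fmeasurableD[OF Bfm[of R]] closure_subset])
  qed
  obtain d where d: "d > 0" "\<And>R. R \<ge> 1 \<Longrightarrow> ball 0 (R * d) \<subseteq> B R"
    using hball_contains_ball[OF nrm ex1] unfolding B_def by blast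
  define c0 where "c0 = unit_ball_vol (real DIM(real^'n)) * d ^ DIM(real^'n)"
  have c0pos: "c0 > 0" using d by (simp add: c0_def)
  have Bgrow: "measure lebesgue (B R) \<ge> c0 * R" if R: "R \<ge> 1" for R
  proof -
    have "measure lebesgue (ball (0::real^'n) (R * d)) = measure lborel (ball (0::real^'n) (R * d))"
      by (simp add: measure_completion)
    also have "\<dots> = unit_ball_vol (real DIM(real^'n)) * (R * d) ^ DIM(real^'n)"
      by (rule content_ball) (use R d(1) in simp)
    also have "\<dots> = c0 * R ^ DIM(real^'n)" by (simp add: c0_def power_mult_distrib)
    also have "\<dots> \<ge> c0 * R"
    proof -
      have "R ^ 1 \<le> R ^ DIM(real^'n)" using R by (intro power_increasing) auto
      then show ?thesis using c0pos by simp
    qed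
    finally have "c0 * R \<le> measure lebesgue (ball (0::real^'n) (R * d))" .
    also have "\<dots> \<le> measure lebesgue (B R)"
      using d(2)[OF R] Bfm by (intro measure_mono_fmeasurable) auto
    finally show ?thesis .
  qed
  have Bpos: "measure lebesgue (B R) > 0" if "R \<ge> 1" for R
  proof -
    have "c0 * R > 0" using c0pos that by simp
    then show ?thesis using Bgrow[OF that] by linarith
  qed
  have f0nn: "f 0 \<ge> 0"
  proof (rule tendsto_lowerbound[OF f_zero])
    show "\<forall>\<^sub>F x in at_right 0. 0 \<le> f x"
      unfolding eventually_at_right_field using f_pos by (intro exI[of _ 1]) auto
  qed simp
  have f0le: "f 0 \<le> f t" if t: "t > 0" for t
  proof (rule tendsto_upperbound[OF f_zero])
    show "\<forall>\<^sub>F x in at_right 0. f x \<le> f t"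
      unfolding eventually_at_right_field using t f_mono
      by (intro exI[of _ t]) (auto simp: mono_on_def)
  qed simp
  have fw0: "f 0 \<le> f (w x)" for x
    using f0le[of "w x"] w_nonneg by (cases "w x = 0") (auto simp: less_le)
  have fwnn: "0 \<le> f (w x)" for x using fw0[of x] f0nn by linarith
  have "ereal (f 0) \<le> Liminf at_top (\<lambda>R::real.
        ereal ((LINT x:hball \<nu> R|lebesgue. f (w x)) / measure lebesgue (hball \<nu> R)))"
  proof (rule Liminf_bounded)
    show "\<forall>\<^sub>F R in at_top. ereal (f 0) \<le> ereal ((LINT x:hball \<nu> R|lebesgue. f (w x)) / measure lebesgue (hball \<nu> R))"
      unfolding eventually_at_top_linorder
    proof (intro exI[of _ 1] allI impI)
      fix R :: real assume R: "R \<ge> 1"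
      have "measure lebesgue (B R) * f 0 = (LINT x:B R|lebesgue. f 0)"
        using Bfm[of R] by (subst set_integral_const) (auto simp: fmeasurable_def)
      also have "\<dots> \<le> (LINT x:B R|lebesgue. f (w x))"
        using Bint Bfm fw0 by (intro set_integral_mono const_set_integrable) auto
      finally show "ereal (f 0) \<le> ereal ((LINT x:hball \<nu> R|lebesgue. f (w x)) / measure lebesgue (hball \<nu> R))"
        using Bpos[OF R] unfolding B_def by (simp add: field_simps)
    qed
  qed
  then have f00: "f 0 = 0" using liminf0 f0nn by simp
  have part1: "(f \<longlongrightarrow> 0) (at_right 0)" using f_zero f00 by simp
  have part2: "ess_inf_on lebesgue {x. \<nu> x > r} w = 0" if r: "r > 0" for r
  proof -
    define S where "S = {c. AE x in lebesgue. x \<in> {x. \<nu> x > r} \<longrightarrow> c \<le> w x}"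
    have S0: "0 \<in> S" using w_nonneg by (simp add: S_def)
    have Sle: "c \<le> 0" if cS: "c \<in> S" for c
    proof (rule ccontr)
      assume "\<not> c \<le> 0"
      then have cpos: "c > 0" by simp
      define a where "a = f c"
      have apos: "a > 0" using f_pos cpos by (simp add: a_def)
      define K where "K = {x. \<nu> x \<le> r}"
      have Ksub: "K \<subseteq> B (r+1)" by (auto simp: K_def B_def hball_def)
      have "closed K" using nrm unfolding K_def hom_norm_def
        by (intro closed_Collect_le) (auto intro: continuous_intros)
      moreover have "bounded K" using Ksub hball_bounded[OF nrm ex1] unfolding B_def
        by (meson bounded_subset)
      ultimately have Kfm: "K \<in> fmeasurable lebesgue"
        by (intro lmeasurable_compact) (simp add: compact_eq_bounded_closed)
      define mK where "mK = measure lebesgue K"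
      have mKnn: "mK \<ge> 0" by (simp add: mK_def)
      have AEc: "AE x in lebesgue. x \<in> {x. \<nu> x > r} \<longrightarrow> c \<le> w x" using cS by (simp add: S_def)
      have "ereal (a/2) \<le> Liminf at_top (\<lambda>R::real.
        ereal ((LINT x:hball \<nu> R|lebesgue. f (w x)) / measure lebesgue (hball \<nu> R)))"
      proof (rule Liminf_bounded)
        show "\<forall>\<^sub>F R in at_top. ereal (a/2) \<le> ereal ((LINT x:hball \<nu> R|lebesgue. f (w x)) / measure lebesgue (hball \<nu> R))"
          unfolding eventually_at_top_linorder
        proof (intro exI[of _ "max 1 (2 * mK / c0)"] allI impI)
          fix R :: real assume R: "R \<ge> max 1 (2 * mK / c0)"
          have R1: "R \<ge> 1" using R by simp
          have "2 * mK / c0 \<le> R" using R by simp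
          then have "2 * mK \<le> c0 * R" using c0pos by (simp add: field_simps)
          then have big: "2 * mK \<le> measure lebesgue (B R)" using Bgrow[OF R1] by linarith
          have DK: "B R - K \<in> fmeasurable lebesgue" using Bfm Kfm by (intro fmeasurable_Diff) auto
          have "measure lebesgue (B R) - mK \<le> measure lebesgue (B R - K)"
            unfolding mK_def using Bfm Kfm by (rule measure_diff_le_measure_setdiff)
          then have "(measure lebesgue (B R) - mK) * a \<le> measure lebesgue (B R - K) * a"
            using apos by (intro mult_right_mono) auto
          also have "\<dots> = (LINT x:(B R - K)|lebesgue. a)"
            using DK by (subst set_integral_const) (auto simp: fmeasurable_def simp del: emeasure_completion)
          also have "\<dots> \<le> (LINT x:(B R - K)|lebesgue. f (w x))"
          proof (rule set_integral_mono_AE)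
            show "set_integrable lebesgue (B R - K) (\<lambda>x. a)" using DK by (rule const_set_integrable)
            show "set_integrable lebesgue (B R - K) (\<lambda>x. f (w x))"
              by (rule set_integrable_subset[OF Bint fmeasurableD[OF DK]]) auto
            show "AE x\<in>B R - K in lebesgue. a \<le> f (w x)"
              using AEc
            proof (rule AE_mp, intro AE_I2 impI)
              fix x assume h: "x \<in> {x. r < \<nu> x} \<longrightarrow> c \<le> w x" and xB: "x \<in> B R - K"
              then have "c \<le> w x" by (auto simp: K_def)
              then show "a \<le> f (w x)" using f_mono cpos unfolding a_def mono_on_def by auto
            qed
          qed
          also have "\<dots> \<le> (LINT x:B R|lebesgue. f (w x))"
            using Bint DK fwnn by (intro set_integral_subset_nonneg) auto
          finally have I: "(measure lebesgue (B R) - mK) * a \<le> (LINT x:B R|lebesgue. f (w x))" .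
          have mp: "measure lebesgue (B R) > 0" using Bpos[OF R1] .
          have "a / 2 * measure lebesgue (B R) \<le> (measure lebesgue (B R) - mK) * a"
          proof -
            have "a * (2 * mK) \<le> a * measure lebesgue (B R)" using big apos by (intro mult_left_mono) auto
            then show ?thesis by (simp add: algebra_simps)
          qed
          then have "a / 2 * measure lebesgue (B R) \<le> (LINT x:B R|lebesgue. f (w x))" using I by linarith
          then show "ereal (a/2) \<le> ereal ((LINT x:hball \<nu> R|lebesgue. f (w x)) / measure lebesgue (hball \<nu> R))"
            using mp unfolding B_def by (simp add: field_simps)
        qed
      qed
      then show False using liminf0 apos by simp
    qed
    have "Sup S = 0" using S0 Sle by (rule cSup_eq_maximum)
    then show ?thesis unfolding ess_inf_on_def S_def .
  qed
  show ?thesis using part1 part2 by blast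
qed

end
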